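(* Consider $n>1$ agents over a time-varying directed graph $\mathbb N(t)=(\mathcal N,\mathcal E(t))$ running the push-sum update $v_i(1)=1$, $v_i(t+1)=l_i(t)v_i(t)+\sum_{j\in\mathcal N_i^{\mathrm{in}}(t)}l_j(t)v_j(t)$, where $l_i(t)=1/(1+o_i(t))$, $o_i(t)$ is the out-degree of $i$ and $\mathcal N_i^{\mathrm{in}}(t)$ its set of in-neighbors at time $t$. Let $\mathcal N_i^+(t)=\mathcal N_i^{\mathrm{in}}(t)\cup\{i\}$ and define the matrix $S(t)$ by $s_{ij}(t)=\frac{l_j(t)v_j(t)}{\sum_{k\in\mathcal N_i^+(t)}l_k(t)v_k(t)}$ for $j\in\mathcal N_i^+(t)$ and $s_{ij}(t)=0$ otherwise. Assume that for every $t$ there is a symmetric stochastic matrix with positive diagonal whose off-diagonal entries vanish outside $\mathcal E(t)$, and that $\{\mathbb N(t)\}$ is repeatedly jointly strongly connected. Then the system $h(t+1)=S(t)h(t)$ is uniformly exponentially consensus stable: there exist a finite constant $\gamma>0$ and $0\le\lambda<1$ such that for any $t_0$ and any $h(t_0)$, $|h(t)|_\infty\le\gamma\lambda^{t-t_0}|h(t_0)|_\infty$ for all $t\ge t_0$.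
   Context: For $x\in\mathbb R^n$, $|x|_\infty=\frac12(\max_i x_i-\min_j x_j)$. Repeatedly jointly strongly connected: there is an integer $r\ge1$ such that for each $k\ge0$ the union of $\mathbb N(rk+1),\dots,\mathbb N(r(k+1))$ (edge sets united) is strongly connected. *)

theory Defs
  imports Main "HOL-Analysis.Analysis"
begin

text \<open>A time-varying graph is
  E :: nat => ('n * 'n) set; an edge (j, i) in E t means j -> i, i.e. j is an
  in-neighbor of i at time t. Self-loops are ignored. Time starts at 1.\<close>

definition in_nbrs :: "(nat \<Rightarrow> ('n \<times> 'n) set) \<Rightarrow> nat \<Rightarrow> 'n \<Rightarrow> 'n set" where
  "in_nbrs E t i = {j. j \<noteq> i \<and> (j, i) \<in> E t}"

definition out_deg :: "(nat \<Rightarrow> ('n \<times> 'n) set) \<Rightarrow> nat \<Rightarrow> 'n \<Rightarrow> nat" where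
  "out_deg E t i = card {j. j \<noteq> i \<and> (i, j) \<in> E t}"

definition lw :: "(nat \<Rightarrow> ('n \<times> 'n) set) \<Rightarrow> nat \<Rightarrow> 'n \<Rightarrow> real" where
  "lw E t i = 1 / (1 + real (out_deg E t i))"

definition in_nbrs_plus :: "(nat \<Rightarrow> ('n \<times> 'n) set) \<Rightarrow> nat \<Rightarrow> 'n \<Rightarrow> 'n set" where
  "in_nbrs_plus E t i = insert i (in_nbrs E t i)"

text \<open>Push-sum weights: v(1) = 1, v(t+1) = l_i(t) v_i(t) + sum over in-neighbors
  of l_j(t) v_j(t), for t >= 1. The value at time 0 is an unused dummy.\<close>
fun pushsum_v :: "(nat \<Rightarrow> ('n \<times> 'n) set) \<Rightarrow> nat \<Rightarrow> 'n \<Rightarrow> real" where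
  "pushsum_v E 0 = (\<lambda>i. 1)"
| "pushsum_v E (Suc t) =
     (if t = 0 then (\<lambda>i. 1)
      else (\<lambda>i. lw E t i * pushsum_v E t i
                + (\<Sum>j\<in>in_nbrs E t i. lw E t j * pushsum_v E t j)))"

definition S_mat :: "(nat \<Rightarrow> ('n \<times> 'n) set) \<Rightarrow> nat \<Rightarrow> 'n \<Rightarrow> 'n \<Rightarrow> real" where
  "S_mat E t i j =
     (if j \<in> in_nbrs_plus E t i
      then lw E t j * pushsum_v E t j / (\<Sum>k\<in>in_nbrs_plus E t i. lw E t k * pushsum_v E t k)
      else 0)"

definition seminorm_inf :: "('n::finite \<Rightarrow> real) \<Rightarrow> real" where
  "seminorm_inf x = (Max (range x) - Min (range x)) / 2"

definition rjsc :: "(nat \<Rightarrow> ('n \<times> 'n) set) \<Rightarrow> bool" where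
  "rjsc E \<longleftrightarrow> (\<exists>r::nat. r \<ge> 1 \<and>
     (\<forall>k. \<forall>i j. (i, j) \<in> (\<Union>t\<in>{r*k+1..r*(k+1)}. E t)\<^sup>*))"

definition sym_stoch_compatible :: "('n::finite \<Rightarrow> 'n \<Rightarrow> real) \<Rightarrow> ('n \<times> 'n) set \<Rightarrow> bool" where
  "sym_stoch_compatible A Et \<longleftrightarrow>
     (\<forall>i j. A i j = A j i) \<and> (\<forall>i j. A i j \<ge> 0) \<and> (\<forall>i. (\<Sum>j\<in>UNIV. A i j) = 1)
     \<and> (\<forall>i. A i i > 0) \<and> (\<forall>i j. i \<noteq> j \<and> (j, i) \<notin> Et \<longrightarrow> A i j = 0)"

end

theory Submission
  imports Defs
begin

lemma cross_edge:
  assumes "(a,b) \<in> F\<^sup>*" "a \<in> X" "b \<notin> X"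
  shows "\<exists>j i. (j,i) \<in> F \<and> j \<in> X \<and> i \<notin> X"
  using assms by (induction rule: rtrancl_induct) auto

lemma reach:
  fixes E :: "nat \<Rightarrow> ('n::finite \<times> 'n) set" and P :: "nat \<Rightarrow> 'n \<Rightarrow> bool"
  assumes r: "r \<ge> 1"
    and conn: "\<forall>k i j. (i,j) \<in> (\<Union>t\<in>{r*k+1..r*(k+1)}. E t)\<^sup>*"
    and mono: "\<And>u i. u \<ge> s \<Longrightarrow> P u i \<Longrightarrow> P (Suc u) i"
    and spread: "\<And>u i j. u \<ge> s \<Longrightarrow> (j,i) \<in> E u \<Longrightarrow> P u j \<Longrightarrow> P (Suc u) i"
    and start: "P s j0"
  shows "P (s + r * (CARD('n) + 1)) i"
proof -
  have monoR: "P w i" if "s \<le> u" "u \<le> w" "P u i" for u w i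
    using that(2,1,3)
  proof (induction w rule: dec_induct)
    case base then show ?case by simp
  next
    case (step n) then show ?case using mono by simp
  qed
  define k0 where "k0 = s div r + 1"
  define T where "T m = r*(k0+m)+1" for m
  have Ts: "s \<le> T 0"
  proof -
    have "r * (s div r) + s mod r = s" by (metis mult.commute div_mult_mod_eq)
    moreover have "s mod r < r" using r by simp
    ultimately have "s \<le> r*(s div r) + r" by linarith
    then show ?thesis unfolding T_def k0_def by (simp add: algebra_simps)
  qed
  have Tmono: "T m \<le> T m'" if "m \<le> m'" for m m' unfolding T_def using that by simp
  have grow: "(\<forall>i. P (T m) i) \<or> card {i. P (T m) i} \<ge> m+1" for m
  proof (induction m)
    case 0
    have "P (T 0) j0" using monoR[OF _ Ts start] by simp
    then have "{i. P (T 0) i} \<noteq> {}" by auto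
    then have "card {i. P (T 0) i} \<ge> 1"
      by (metis One_nat_def Suc_leI card_gt_0_iff finite)
    then show ?case by simp
  next
    case (Suc m)
    show ?case
    proof (cases "\<forall>i. P (T m) i")
      case True
      then show ?thesis using monoR[OF _ Tmono[of m "Suc m"]] Ts Tmono[of 0 m] by auto
    next
      case False
      then obtain b where b: "\<not> P (T m) b" by auto
      from False Suc have cm: "card {i. P (T m) i} \<ge> m+1" by auto
      then have "{i. P (T m) i} \<noteq> {}" by (metis card.empty not_less_eq_eq zero_le Suc_eq_plus1)
      then obtain a where a: "P (T m) a" by auto
      from conn have "(a,b) \<in> (\<Union>t\<in>{r*(k0+m)+1..r*(k0+m+1)}. E t)\<^sup>*" by blast
      from cross_edge[OF this, of "{i. P (T m) i}"] a b
      obtain j i where ji: "(j,i) \<in> (\<Union>t\<in>{r*(k0+m)+1..r*(k0+m+1)}. E t)"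
        "P (T m) j" "\<not> P (T m) i" by auto
      then obtain t where t: "t \<in> {r*(k0+m)+1..r*(k0+m+1)}" "(j,i) \<in> E t" by auto
      have sT: "s \<le> T m" using Ts Tmono[of 0 m] by simp
      have "T m \<le> t" using t unfolding T_def by simp
      then have "P t j" using monoR[OF sT _ ji(2)] by simp
      then have "P (Suc t) i" using spread[OF _ t(2)] sT \<open>T m \<le> t\<close> by simp
      moreover have "Suc t \<le> T (Suc m)" using t unfolding T_def by simp
      ultimately have Pi: "P (T (Suc m)) i" using monoR[of "Suc t"] sT \<open>T m \<le> t\<close> by simp
      have sub: "insert i {i. P (T m) i} \<subseteq> {i. P (T (Suc m)) i}"
        using Pi monoR[OF sT Tmono[of m "Suc m"]] by auto
      have "card (insert i {i. P (T m) i}) = card {i. P (T m) i} + 1"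
        using ji(3) by simp
      moreover have "card (insert i {i. P (T m) i}) \<le> card {i. P (T (Suc m)) i}"
        using sub by (simp add: card_mono)
      ultimately show ?thesis using cm by simp
    qed
  qed
  have all: "P (T (CARD('n) - 1)) i" for i
  proof -
    have "card {i. P (T (CARD('n) - 1)) i} \<ge> CARD('n) \<Longrightarrow> {i. P (T (CARD('n) - 1)) i} = UNIV"
      by (metis card_seteq finite subset_UNIV)
    then show ?thesis using grow[of "CARD('n) - 1"] by force
  qed
  have "T (CARD('n) - 1) \<le> s + r * (CARD('n) + 1)"
  proof -
    have c: "CARD('n) \<ge> 1" by (simp add: Suc_leI)
    have "r * (s div r) \<le> s" by simp
    moreover have "T (CARD('n) - 1) = r * (s div r) + r * CARD('n) + 1"
      unfolding T_def k0_def using c by (simp add: algebra_simps)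
    moreover have "s + r*(CARD('n)+1) = s + r*CARD('n) + r" by (simp add: algebra_simps)
    ultimately show ?thesis using r by linarith
  qed
  then show ?thesis using monoR[OF _ _ all] Ts Tmono[of 0 "CARD('n) - 1"] by simp
qed


lemma in_plus: "j = i \<or> (j,i) \<in> E t \<Longrightarrow> j \<in> in_nbrs_plus E t i"
  unfolding in_nbrs_plus_def in_nbrs_def by auto

lemma lw_pos: "lw E t i > 0" unfolding lw_def by simp
lemma lw_le1: "lw E t i \<le> 1" unfolding lw_def by simp
lemma lw_ge: "lw E t (i::'n::finite) \<ge> 1 / (1 + real CARD('n))"
proof -
  have "out_deg E t i \<le> CARD('n)" unfolding out_deg_def by (simp add: card_mono)
  then show ?thesis unfolding lw_def by (simp add: frac_le)
qed

lemma v_Suc_plus: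
  assumes "t \<ge> 1"
  shows "pushsum_v E (Suc t) i = (\<Sum>j\<in>in_nbrs_plus E t (i::'n::finite). lw E t j * pushsum_v E t j)"
proof -
  have "i \<notin> in_nbrs E t i" unfolding in_nbrs_def by simp
  then show ?thesis using assms unfolding in_nbrs_plus_def by simp
qed

lemma v_pos: "pushsum_v E t (i::'n::finite) > 0"
proof (induction t arbitrary: i)
  case 0 then show ?case by simp
next
  case (Suc t)
  show ?case
  proof (cases "t = 0")
    case True then show ?thesis by simp
  next
    case False
    have "0 < lw E t i * pushsum_v E t i" using Suc lw_pos by (metis mult_pos_pos)
    moreover have "0 \<le> (\<Sum>j\<in>in_nbrs E t i. lw E t j * pushsum_v E t j)"
      by (intro sum_nonneg mult_nonneg_nonneg less_imp_le lw_pos Suc.IH)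
    ultimately show ?thesis using False by simp
  qed
qed

lemma lwv_pos: "0 < lw E t j * pushsum_v E t (j::'n::finite)"
  by (intro mult_pos_pos lw_pos v_pos)

lemma v_ge_member:
  assumes "t \<ge> 1" "j \<in> in_nbrs_plus E t (i::'n::finite)"
  shows "lw E t j * pushsum_v E t j \<le> pushsum_v E (Suc t) i"
  unfolding v_Suc_plus[OF assms(1)]
  by (rule member_le_sum) (use assms lwv_pos in \<open>auto intro: less_imp_le\<close>)

lemma card_out:
  "card {i. j \<in> in_nbrs_plus E t i} = 1 + out_deg E t (j::'n::finite)"
proof -
  have "{i. j \<in> in_nbrs_plus E t i} = insert j {i. i \<noteq> j \<and> (j, i) \<in> E t}"
    unfolding in_nbrs_plus_def in_nbrs_def by auto
  then show ?thesis unfolding out_deg_def by simp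
qed

lemma v_sum: "(\<Sum>i\<in>UNIV. pushsum_v E t (i::'n::finite)) = real CARD('n)"
proof (induction t)
  case 0 then show ?case by simp
next
  case (Suc t)
  show ?case
  proof (cases "t = 0")
    case True then show ?thesis by simp
  next
    case False
    then have t1: "t \<ge> 1" by simp
    define f where "f j = lw E t j * pushsum_v E t j" for j
    have "(\<Sum>i\<in>UNIV. pushsum_v E (Suc t) i)
        = (\<Sum>i\<in>UNIV. \<Sum>j\<in>UNIV. if j \<in> in_nbrs_plus E t i then f j else 0)"
      unfolding v_Suc_plus[OF t1] f_def
      by (simp add: sum.inter_restrict[symmetric] Int_absorb1 Int_commute)
    also have "\<dots> = (\<Sum>j\<in>UNIV. \<Sum>i\<in>UNIV. if j \<in> in_nbrs_plus E t i then f j else 0)"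
      by (rule sum.swap)
    also have "\<dots> = (\<Sum>j\<in>UNIV. f j * card {i. j \<in> in_nbrs_plus E t i})"
    proof (rule sum.cong[OF refl])
      fix j
      show "(\<Sum>i\<in>UNIV. if j \<in> in_nbrs_plus E t i then f j else 0) = f j * card {i. j \<in> in_nbrs_plus E t i}"
        by (simp add: sum.If_cases)
    qed
    also have "\<dots> = (\<Sum>j\<in>UNIV. pushsum_v E t j)"
      unfolding card_out f_def lw_def by simp
    finally show ?thesis using Suc by simp
  qed
qed

lemma v_le: "pushsum_v E t (i::'n::finite) \<le> real CARD('n)"
proof -
  have "pushsum_v E t i \<le> (\<Sum>i\<in>UNIV. pushsum_v E t i)"
    by (rule member_le_sum) (auto intro: less_imp_le v_pos)
  then show ?thesis using v_sum by metis
qed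


lemma v_step_bound:
  assumes "u \<ge> 1" "j \<in> in_nbrs_plus E u (i::'n::finite)" "c \<le> pushsum_v E u j" "0 \<le> c"
  shows "c / (1 + real CARD('n)) \<le> pushsum_v E (Suc u) i"
proof -
  have "c / (1 + real CARD('n)) = (1 / (1 + real CARD('n))) * c" by simp
  also have "\<dots> \<le> lw E u j * pushsum_v E u j"
    by (rule mult_mono) (use assms lw_ge[of E u j] lw_pos[of E u j] in auto)
  also have "\<dots> \<le> pushsum_v E (Suc u) i" by (rule v_ge_member[OF assms(1,2)])
  finally show ?thesis .
qed

lemma v_lower:
  fixes E :: "nat \<Rightarrow> ('n::finite \<times> 'n) set"
  assumes r: "r \<ge> 1"
    and conn: "\<forall>k i j. (i,j) \<in> (\<Union>t\<in>{r*k+1..r*(k+1)}. E t)\<^sup>*"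
    and t: "t \<ge> 1"
  shows "(1 / (1 + real CARD('n))) ^ (r * (CARD('n) + 1)) \<le> pushsum_v E t i"
proof -
  define q where "q = 1 / (1 + real CARD('n))"
  define N where "N = r * (CARD('n) + 1)"
  have q0: "0 \<le> q" and q1: "q \<le> 1" unfolding q_def by auto
  have diag: "q ^ (t - 1) \<le> pushsum_v E t i" if "t \<ge> 1" for t i
    using that
  proof (induction t rule: dec_induct)
    case base then show ?case by simp
  next
    case (step u)
    have "q ^ (u - 1) / (1 + real CARD('n)) \<le> pushsum_v E (Suc u) i"
      by (rule v_step_bound[OF step(1) in_plus step(3)]) (use q0 in auto)
    moreover have "q ^ (Suc u - 1) = q ^ (u - 1) / (1 + real CARD('n))"
      using step(1) unfolding q_def
      by (metis Suc_diff_le diff_Suc_1 divide_inverse_commute inverse_eq_divide mult.commute power_Suc)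
    ultimately show ?case by simp
  qed
  show ?thesis
  proof (cases "t \<le> N + 1")
    case True
    have "q ^ N \<le> q ^ (t - 1)" by (rule power_decreasing) (use True q0 q1 in auto)
    from order_trans[OF this diag[OF t, of i]] show ?thesis unfolding q_def N_def .
  next
    case False
    define s where "s = t - N"
    have s1: "s \<ge> 1" and ts: "t = s + N" using False unfolding s_def by auto
    obtain j0 where j0: "1 \<le> pushsum_v E s j0"
    proof (rule ccontr)
      assume "\<not> thesis"
      then have "\<forall>j. pushsum_v E s j < 1" using that by (meson not_le)
      then have "(\<Sum>j\<in>UNIV. pushsum_v E s j) < (\<Sum>j\<in>(UNIV::'n set). 1)"
        by (intro sum_strict_mono) auto
      then show False using v_sum[of E s] by simp
    qed
    have "q ^ (s + N - s) \<le> pushsum_v E (s + N) i"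
      unfolding N_def
    proof (rule reach[OF r conn, where P = "\<lambda>u i. q ^ (u - s) \<le> pushsum_v E u i"])
      fix u i j
      assume "s \<le> u" "(j, i) \<in> E u" "q ^ (u - s) \<le> pushsum_v E u j"
      then have "q ^ (u - s) / (1 + real CARD('n)) \<le> pushsum_v E (Suc u) i"
        using s1 q0 by (intro v_step_bound in_plus) auto
      moreover have "q ^ (Suc u - s) = q ^ (u - s) / (1 + real CARD('n))"
        using \<open>s \<le> u\<close> unfolding q_def
        by (metis Suc_diff_le divide_inverse_commute inverse_eq_divide mult.commute power_Suc)
      ultimately show "q ^ (Suc u - s) \<le> pushsum_v E (Suc u) i" by simp
    next
      fix u i
      assume "s \<le> u" "q ^ (u - s) \<le> pushsum_v E u i"
      then have "q ^ (u - s) / (1 + real CARD('n)) \<le> pushsum_v E (Suc u) i"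
        using s1 q0 by (intro v_step_bound in_plus) auto
      moreover have "q ^ (Suc u - s) = q ^ (u - s) / (1 + real CARD('n))"
        using \<open>s \<le> u\<close> unfolding q_def
        by (metis Suc_diff_le divide_inverse_commute inverse_eq_divide mult.commute power_Suc)
      ultimately show "q ^ (Suc u - s) \<le> pushsum_v E (Suc u) i" by simp
    next
      show "q ^ (s - s) \<le> pushsum_v E s j0" using j0 by simp
    qed
    then show ?thesis using ts unfolding q_def N_def by simp
  qed
qed


lemma D_pos: "0 < (\<Sum>k\<in>in_nbrs_plus E t (i::'n::finite). lw E t k * pushsum_v E t k)"
proof -
  have "i \<in> in_nbrs_plus E t i" by (simp add: in_nbrs_plus_def)
  moreover have "lw E t i * pushsum_v E t i \<le> (\<Sum>k\<in>in_nbrs_plus E t i. lw E t k * pushsum_v E t k)"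
    by (rule member_le_sum) (use calculation lwv_pos in \<open>auto intro: less_imp_le\<close>)
  ultimately show ?thesis using lwv_pos[of E t i] by linarith
qed

lemma D_le: "(\<Sum>k\<in>in_nbrs_plus E t (i::'n::finite). lw E t k * pushsum_v E t k) \<le> real CARD('n)"
proof -
  have "(\<Sum>k\<in>in_nbrs_plus E t i. lw E t k * pushsum_v E t k) \<le> (\<Sum>k\<in>in_nbrs_plus E t i. pushsum_v E t k)"
  proof (rule sum_mono)
    fix k show "lw E t k * pushsum_v E t k \<le> pushsum_v E t k"
      using lw_le1[of E t k] v_pos[of E t k] by (simp add: mult_le_cancel_right1)
  qed
  also have "\<dots> \<le> (\<Sum>k\<in>UNIV. pushsum_v E t k)"
    by (rule sum_mono2) (auto intro: less_imp_le v_pos)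
  finally show ?thesis using v_sum by metis
qed

lemma S_nonneg: "0 \<le> S_mat E t i (j::'n::finite)"
  unfolding S_mat_def using D_pos[of E t i] lwv_pos[of E t j] by simp

lemma S_sum: "(\<Sum>j\<in>UNIV. S_mat E t i (j::'n::finite)) = 1"
proof -
  have "(\<Sum>j\<in>UNIV. S_mat E t i j) = (\<Sum>j\<in>in_nbrs_plus E t i. lw E t j * pushsum_v E t j
          / (\<Sum>k\<in>in_nbrs_plus E t i. lw E t k * pushsum_v E t k))"
    unfolding S_mat_def by (simp add: sum.If_cases)
  also have "\<dots> = 1" using D_pos[of E t i] by (simp add: sum_divide_distrib[symmetric])
  finally show ?thesis .
qed

lemma S_lower:
  assumes "\<forall>j. \<delta> \<le> pushsum_v E t (j::'n::finite)" "0 \<le> \<delta>" "j \<in> in_nbrs_plus E t i"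
  shows "\<delta> / ((1 + real CARD('n)) * real CARD('n)) \<le> S_mat E t i j"
proof -
  have a: "\<delta> / (1 + real CARD('n)) \<le> lw E t j * pushsum_v E t j"
  proof -
    have "\<delta> / (1 + real CARD('n)) = (1 / (1 + real CARD('n))) * \<delta>" by simp
    also have "\<dots> \<le> lw E t j * pushsum_v E t j"
      by (rule mult_mono) (use assms lw_ge[of E t j] lw_pos[of E t j] in auto)
    finally show ?thesis .
  qed
  have "\<delta> / ((1 + real CARD('n)) * real CARD('n)) = (\<delta> / (1 + real CARD('n))) / real CARD('n)"
    by simp
  also have "\<dots> \<le> lw E t j * pushsum_v E t j / (\<Sum>k\<in>in_nbrs_plus E t i. lw E t k * pushsum_v E t k)"
    by (rule frac_le) (use a D_pos[of E t i] D_le[of E t i] lwv_pos[of E t j] in auto)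
  finally show ?thesis unfolding S_mat_def using assms(3) by simp
qed

lemma step_upper:
  fixes S :: "'n::finite \<Rightarrow> real"
  assumes "\<forall>j. 0 \<le> S j" "(\<Sum>j\<in>UNIV. S j) = 1" "\<forall>j. x j \<le> M" "\<eta> \<le> S k" "x k \<le> M - c" "0 \<le> c"
    "0 \<le> \<eta>"
  shows "(\<Sum>j\<in>UNIV. S j * x j) \<le> M - \<eta> * c"
proof -
  have "(\<Sum>j\<in>UNIV. S j * (M - x j)) = (\<Sum>j\<in>UNIV. S j) * M - (\<Sum>j\<in>UNIV. S j * x j)"
    by (simp add: right_diff_distrib sum_subtractf sum_distrib_right)
  then have e: "(\<Sum>j\<in>UNIV. S j * x j) = M - (\<Sum>j\<in>UNIV. S j * (M - x j))" using assms(2) by simp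
  have "S k * (M - x k) \<le> (\<Sum>j\<in>UNIV. S j * (M - x j))"
    by (rule member_le_sum) (use assms in auto)
  moreover have "\<eta> * c \<le> S k * (M - x k)"
    by (rule mult_mono) (use assms in auto)
  ultimately show ?thesis using e by linarith
qed

lemma step_lower:
  fixes S :: "'n::finite \<Rightarrow> real"
  assumes "\<forall>j. 0 \<le> S j" "(\<Sum>j\<in>UNIV. S j) = 1" "\<forall>j. m \<le> x j" "\<eta> \<le> S k" "m + c \<le> x k" "0 \<le> c"
    "0 \<le> \<eta>"
  shows "m + \<eta> * c \<le> (\<Sum>j\<in>UNIV. S j * x j)"
proof -
  have "(\<Sum>j\<in>UNIV. S j * (- x j)) \<le> (- m) - \<eta> * c"
    by (rule step_upper[where k = k]) (use assms in auto)
  then show ?thesis by (simp add: sum_negf)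
qed


lemma Max_bound: "(\<forall>i. (x::'n::finite \<Rightarrow> real) i \<le> B) \<Longrightarrow> Max (range x) \<le> B"
  by (simp add: Max_le_iff)
lemma Min_bound: "(\<forall>i. B \<le> (x::'n::finite \<Rightarrow> real) i) \<Longrightarrow> B \<le> Min (range x)"
  by (simp add: Min_ge_iff)
lemma Max_ge': "(x::'n::finite \<Rightarrow> real) i \<le> Max (range x)" by simp
lemma Min_le': "Min (range x) \<le> (x::'n::finite \<Rightarrow> real) i" by simp
lemma Max_ex: "\<exists>i. (x::'n::finite \<Rightarrow> real) i = Max (range x)"
proof -
  have "Max (range x) \<in> range x" by (rule Max_in) auto
  then show ?thesis by (metis imageE)
qed
lemma Min_ex: "\<exists>i. (x::'n::finite \<Rightarrow> real) i = Min (range x)"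
proof -
  have "Min (range x) \<in> range x" by (rule Min_in) auto
  then show ?thesis by (metis imageE)
qed

context
  fixes S :: "nat \<Rightarrow> 'n::finite \<Rightarrow> 'n \<Rightarrow> real" and h :: "nat \<Rightarrow> 'n \<Rightarrow> real" and s :: nat
  assumes Snn: "\<And>t i j. t \<ge> s \<Longrightarrow> 0 \<le> S t i j"
    and Ssum: "\<And>t i. t \<ge> s \<Longrightarrow> (\<Sum>j\<in>UNIV. S t i j) = 1"
    and rec: "\<And>t i. t \<ge> s \<Longrightarrow> h (Suc t) i = (\<Sum>j\<in>UNIV. S t i j * h t j)"
begin

lemma bounds:
  assumes "u \<ge> s"
  shows "Min (range (h s)) \<le> h u i \<and> h u i \<le> Max (range (h s))"
  using assms
proof (induction u arbitrary: i rule: dec_induct)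
  case base then show ?case by simp
next
  case (step u)
  have "(\<Sum>j\<in>UNIV. S u i j * h u j) \<le> Max (range (h s)) - 0 * 0"
    by (rule step_upper[where k = i]) (use step Snn Ssum in auto)
  moreover have "Min (range (h s)) + 0 * 0 \<le> (\<Sum>j\<in>UNIV. S u i j * h u j)"
    by (rule step_lower[where k = i]) (use step Snn Ssum in auto)
  ultimately show ?case using rec[OF step(1)] by simp
qed

lemma semi_mono:
  assumes "u \<ge> s"
  shows "seminorm_inf (h u) \<le> seminorm_inf (h s)"
proof -
  have a: "Max (range (h u)) \<le> Max (range (h s))" by (rule Max_bound) (use bounds[OF assms] in auto)
  have b: "Min (range (h s)) \<le> Min (range (h u))" by (rule Min_bound) (use bounds[OF assms] in auto)
  show ?thesis unfolding seminorm_inf_def by (intro divide_right_mono diff_mono a b) simp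
qed

lemma contract:
  fixes E :: "nat \<Rightarrow> ('n \<times> 'n) set"
  assumes r: "r \<ge> 1"
    and conn: "\<forall>k i j. (i,j) \<in> (\<Union>t\<in>{r*k+1..r*(k+1)}. E t)\<^sup>*"
    and Slow: "\<And>t i j. t \<ge> s \<Longrightarrow> j = i \<or> (j,i) \<in> E t \<Longrightarrow> \<eta> \<le> S t i j"
    and eta: "0 \<le> \<eta>"
  shows "seminorm_inf (h (s + r*(CARD('n)+1))) \<le> (1 - 2 * \<eta> ^ (r*(CARD('n)+1))) * seminorm_inf (h s)"
proof -
  define M where "M = Max (range (h s))"
  define m where "m = Min (range (h s))"
  define N where "N = r*(CARD('n)+1)"
  have Mm: "0 \<le> M - m" unfolding M_def m_def using Max_ge'[of "h s"] Min_le'[of "h s"] by force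
  have step_eq: "\<eta> * (\<eta> ^ (u - s) * (M - m)) = \<eta> ^ (Suc u - s) * (M - m)" if "s \<le> u" for u
    using that by (simp add: Suc_diff_le)
  have stepU: "h (Suc u) i \<le> M - \<eta> ^ (Suc u - s) * (M - m)"
    if a: "s \<le> u" "j = i \<or> (j, i) \<in> E u" "h u j \<le> M - \<eta> ^ (u - s) * (M - m)" for u i j
  proof -
    have "(\<Sum>j\<in>UNIV. S u i j * h u j) \<le> M - \<eta> * (\<eta> ^ (u - s) * (M - m))"
      by (rule step_upper[where k = j]) (use a Snn Ssum Slow eta Mm bounds in \<open>auto simp: M_def\<close>)
    then show ?thesis using rec[OF a(1)] step_eq[OF a(1)] by simp
  qed
  have stepL: "m + \<eta> ^ (Suc u - s) * (M - m) \<le> h (Suc u) i"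
    if a: "s \<le> u" "j = i \<or> (j, i) \<in> E u" "m + \<eta> ^ (u - s) * (M - m) \<le> h u j" for u i j
  proof -
    have "m + \<eta> * (\<eta> ^ (u - s) * (M - m)) \<le> (\<Sum>j\<in>UNIV. S u i j * h u j)"
      by (rule step_lower[where k = j]) (use a Snn Ssum Slow eta Mm bounds in \<open>auto simp: m_def\<close>)
    then show ?thesis using rec[OF a(1)] step_eq[OF a(1)] by simp
  qed
  obtain j0 where j0: "h s j0 = m" using Min_ex unfolding m_def by blast
  obtain j1 where j1: "h s j1 = M" using Max_ex unfolding M_def by blast
  have up: "h (s + N) i \<le> M - \<eta> ^ (s + N - s) * (M - m)" for i
    unfolding N_def
  proof (rule reach[OF r conn, where P = "\<lambda>u i. h u i \<le> M - \<eta> ^ (u - s) * (M - m)"])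
    show "h (Suc u) i \<le> M - \<eta> ^ (Suc u - s) * (M - m)"
      if "s \<le> u" "h u i \<le> M - \<eta> ^ (u - s) * (M - m)" for u i
      using stepU[of u i i] that by simp
    show "h (Suc u) i \<le> M - \<eta> ^ (Suc u - s) * (M - m)"
      if "s \<le> u" "(j, i) \<in> E u" "h u j \<le> M - \<eta> ^ (u - s) * (M - m)" for u i j
      using stepU[of u j i] that by simp
    show "h s j0 \<le> M - \<eta> ^ (s - s) * (M - m)" using j0 by simp
  qed
  have lo: "m + \<eta> ^ (s + N - s) * (M - m) \<le> h (s + N) i" for i
    unfolding N_def
  proof (rule reach[OF r conn, where P = "\<lambda>u i. m + \<eta> ^ (u - s) * (M - m) \<le> h u i"])
    show "m + \<eta> ^ (Suc u - s) * (M - m) \<le> h (Suc u) i"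
      if "s \<le> u" "m + \<eta> ^ (u - s) * (M - m) \<le> h u i" for u i
      using stepL[of u i i] that by simp
    show "m + \<eta> ^ (Suc u - s) * (M - m) \<le> h (Suc u) i"
      if "s \<le> u" "(j, i) \<in> E u" "m + \<eta> ^ (u - s) * (M - m) \<le> h u j" for u i j
      using stepL[of u j i] that by simp
    show "m + \<eta> ^ (s - s) * (M - m) \<le> h s j1" using j1 by simp
  qed
  have a: "Max (range (h (s + N))) \<le> M - \<eta> ^ N * (M - m)" by (rule Max_bound) (use up in simp)
  have b: "m + \<eta> ^ N * (M - m) \<le> Min (range (h (s + N)))" by (rule Min_bound) (use lo in simp)
  have "seminorm_inf (h (s + N)) \<le> ((M - m) - 2 * \<eta> ^ N * (M - m)) / 2"
    unfolding seminorm_inf_def by (intro divide_right_mono) (use a b in linarith, simp)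
  also have "\<dots> = (1 - 2 * \<eta> ^ N) * seminorm_inf (h s)"
    unfolding seminorm_inf_def M_def m_def by (simp add: algebra_simps)
  finally show ?thesis unfolding N_def .
qed

end


lemma sem_nonneg: "0 \<le> seminorm_inf (x::'n::finite \<Rightarrow> real)"
  unfolding seminorm_inf_def using Max_ge'[of x undefined] Min_le'[of x undefined] by simp

theorem lemma2:
  fixes E :: "nat \<Rightarrow> ('n::finite \<times> 'n) set"
  assumes "CARD('n) > 1"
    and "\<forall>t\<ge>1. \<exists>A. sym_stoch_compatible A (E t)"
    and "rjsc E"
  shows "\<exists>\<gamma> lam. \<gamma> > 0 \<and> 0 \<le> lam \<and> lam < 1 \<and>
    (\<forall>t0 \<ge> 1. \<forall>h :: nat \<Rightarrow> 'n \<Rightarrow> real.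
       (\<forall>t\<ge>t0. \<forall>i. h (Suc t) i = (\<Sum>j\<in>UNIV. S_mat E t i j * h t j)) \<longrightarrow>
       (\<forall>t\<ge>t0. seminorm_inf (h t) \<le> \<gamma> * lam ^ (t - t0) * seminorm_inf (h t0)))"
proof -
  obtain r where r: "r \<ge> 1" and conn: "\<forall>k i j. (i,j) \<in> (\<Union>t\<in>{r*k+1..r*(k+1)}. E t)\<^sup>*"
    using assms(3) unfolding rjsc_def by blast
  define n where "n = real CARD('n)"
  define N where "N = r*(CARD('n)+1)"
  define \<delta> where "\<delta> = (1/(1+n))^N"
  define \<eta> where "\<eta> = \<delta>/((1+n)*n)"
  define c where "c = 1 - 2*\<eta>^N"
  have n2: "n \<ge> 2" using assms(1) unfolding n_def by simp
  have N1: "N \<ge> 1" using r unfolding N_def by simp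
  have d0: "0 < \<delta>" unfolding \<delta>_def using n2 by simp
  have d1: "\<delta> \<le> 1" unfolding \<delta>_def using n2 by (simp add: power_le_one)
  have e0: "0 < \<eta>" unfolding \<eta>_def using d0 n2 by simp
  have "(1+n)*n \<ge> 6" using n2 mult_mono[of 3 "1+n" 2 n] by simp
  then have e1: "\<eta> \<le> 1/6" unfolding \<eta>_def using d0 d1 by (simp add: divide_simps)
  have eN: "\<eta>^N \<le> \<eta>" using power_decreasing[of 1 N \<eta>] N1 e0 e1 by simp
  have eN0: "0 < \<eta>^N" using e0 by simp
  have c0: "0 < c" and c1: "c < 1" unfolding c_def using eN e1 eN0 by auto
  have vlow: "\<delta> \<le> pushsum_v E t j" if "t \<ge> 1" for t j
    unfolding \<delta>_def n_def N_def using v_lower[OF r conn that] by simp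
  have Slow: "\<eta> \<le> S_mat E t i j" if "t \<ge> 1" "j = i \<or> (j,i) \<in> E t" for t i j
    unfolding \<eta>_def n_def
    by (rule S_lower) (use vlow[OF that(1)] d0 in_plus[of j i E t, OF that(2)] in \<open>auto simp: \<delta>_def n_def\<close>)
  define lam where "lam = root N c"
  have l0: "0 \<le> lam" unfolding lam_def using c0 by (simp add: real_root_ge_zero)
  have l1: "lam < 1" unfolding lam_def using c1 N1 by simp
  have lN: "lam ^ N = c" unfolding lam_def using c0 N1 by (simp add: real_root_pow_pos2)
  show ?thesis
  proof (rule exI[of _ "1/c"], rule exI[of _ lam], intro conjI allI impI)
    show "0 < 1/c" using c0 by simp
    show "0 \<le> lam" by (rule l0)
    show "lam < 1" by (rule l1)
    fix t0 :: nat and h :: "nat \<Rightarrow> 'n \<Rightarrow> real" and t :: nat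
    assume t0: "1 \<le> t0" and rec: "\<forall>t\<ge>t0. \<forall>i. h (Suc t) i = (\<Sum>j\<in>UNIV. S_mat E t i j * h t j)"
      and t: "t0 \<le> t"
    have cstep: "seminorm_inf (h (s + N)) \<le> c * seminorm_inf (h s)" if "s \<ge> t0" for s
      unfolding c_def N_def
      by (rule contract[where S = "S_mat E" and E = E])
        (use that t0 rec S_nonneg S_sum Slow e0 r conn in auto)
    have mono: "seminorm_inf (h u) \<le> seminorm_inf (h s)" if "s \<ge> t0" "u \<ge> s" for s u
      by (rule semi_mono[where S = "S_mat E"]) (use that t0 rec S_nonneg S_sum in auto)
    have iter: "seminorm_inf (h (t0 + q*N)) \<le> c^q * seminorm_inf (h t0)" for q
    proof (induction q)
      case 0 then show ?case by simp
    next
      case (Suc q)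
      have "seminorm_inf (h (t0 + Suc q * N)) = seminorm_inf (h ((t0 + q*N) + N))"
        by (simp add: algebra_simps)
      also have "\<dots> \<le> c * seminorm_inf (h (t0 + q*N))" by (rule cstep) simp
      also have "\<dots> \<le> c * (c^q * seminorm_inf (h t0))"
        by (rule mult_left_mono[OF Suc]) (use c0 in simp)
      finally show ?case by simp
    qed
    define q where "q = (t - t0) div N"
    define rm where "rm = (t - t0) mod N"
    have tq: "t - t0 = N*q + rm" unfolding q_def rm_def by simp
    have rmN: "rm \<le> N" unfolding rm_def using N1 by (simp add: less_imp_le)
    have "seminorm_inf (h t) \<le> seminorm_inf (h (t0 + q*N))"
      by (rule mono) (use tq t in \<open>auto simp: mult.commute\<close>)
    also have "\<dots> \<le> c^q * seminorm_inf (h t0)" by (rule iter)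
    also have "\<dots> \<le> (1/c) * lam ^ (t - t0) * seminorm_inf (h t0)"
    proof (rule mult_right_mono[OF _ sem_nonneg])
      have "lam ^ N \<le> lam ^ rm" by (rule power_decreasing) (use rmN l0 l1 in auto)
      then have "c \<le> lam ^ rm" using lN by simp
      then have "c^q * c \<le> c^q * lam ^ rm" by (rule mult_left_mono) (use c0 in simp)
      also have "c^q * lam ^ rm = lam ^ (t - t0)"
        unfolding tq power_add power_mult lN by simp
      finally have "c^q * c \<le> lam ^ (t - t0)" .
      then show "c^q \<le> (1/c) * lam ^ (t - t0)" using c0 by (simp add: field_simps)
    qed
    finally show "seminorm_inf (h t) \<le> 1 / c * lam ^ (t - t0) * seminorm_inf (h t0)" .
  qed
qed


end
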